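(* Let $X$ be an extensible marked Dynkin diagram with $d$ nodes, let $n\ge d$ with $\det(X_n)\ne0$, let $R=\mathbb Z/\det(X_n)\mathbb Z$, and let $b_1,\dots,b_n\in R$ be such that $(-\Delta)\,\omega_i^{(n)}\equiv b_i\,\overline{\omega}_1^{(n)}\pmod{Q(X_n)}$ for $i=1,\dots,n$. Put $b=(b_1,\dots,b_n)^T\in R^n$ and let $A=C(X_n)$, viewed as a matrix over $R$. Then: (i) $A^Tb=0$ in $R^n$; (ii) if $x\in R^n$ satisfies $A^Tx=0$, then $x$ is a multiple of $b$; (iii) $b$ is the unique element of $R^n$ such that $A^Tb=0$ and $b_n=-\Delta+\det(X_n)\mathbb Z$.
   Context: A marked Dynkin diagram $X$ has nodes $1,\dots,d$ with node $d$ distinguished and symmetrizable generalized Cartan matrix $C(X)$. For $n\ge d$, $X_n$ is obtained by attaching a simply-laced chain of new nodes $d+1,\dots,n$ to node $d$ (so $C(X_n)$ has $C(X)$ as upper-left block, $2$ on the remaining diagonal, $-1$ in positions $(i,i+1),(i+1,i)$ for $d\le i<n$, $0$ elsewhere). $\det(Y)$ is the determinant of the generalized Cartan matrix of $Y$. The sequence $\det(X_n)$, $n\ge d$, is arithmetic with common difference $\Delta$; $X$ is extensible if $\Delta\ne0$, $\det(X)\ne0$ and $\gcd(\Delta,\det X)=1$. For $\mathfrak g(X_n)$: simple roots $\alpha_i^{(n)}$, coroots $\check\alpha_i^{(n)}$ with $\alpha_j^{(n)}(\check\alpha_i^{(n)})=C(X_n)_{ij}$, root lattice $Q(X_n)$,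 weight lattice $P(X_n)$, fundamental weights $\omega_i^{(n)}$ with $\omega_i^{(n)}(\check\alpha_j^{(n)})=\delta_{ij}$, $\overline{\omega}_1^{(n)}=\omega_n^{(n)}$. When $\det(X_n)\ne0$, $P(X_n)/Q(X_n)$ is cyclic of order $|\det(X_n)|$ generated by $[\overline{\omega}_1^{(n)}]$, so multiplying $\overline{\omega}_1^{(n)}$ by an element of $R$ is well defined modulo $Q(X_n)$. *)

theory Defs
  imports "Jordan_Normal_Form.Determinant" "HOL-Number_Theory.Cong"
begin

text \<open>Nodes 1..n of the paper are indices 0..n-1 here. A marked Dynkin diagram X with d nodes
is given by its d x d integer generalized Cartan matrix C; the distinguished node d is index d-1.\<close>

definition is_gcm :: "nat \<Rightarrow> int mat \<Rightarrow> bool" where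
  "is_gcm d C \<longleftrightarrow> C \<in> carrier_mat d d \<and>
     (\<forall>i<d. C $$ (i,i) = 2) \<and>
     (\<forall>i<d. \<forall>j<d. i \<noteq> j \<longrightarrow> C $$ (i,j) \<le> 0) \<and>
     (\<forall>i<d. \<forall>j<d. C $$ (i,j) = 0 \<longleftrightarrow> C $$ (j,i) = 0)"

definition symmetrizable :: "nat \<Rightarrow> int mat \<Rightarrow> bool" where
  "symmetrizable d C \<longleftrightarrow> (\<exists>\<epsilon> :: nat \<Rightarrow> rat. (\<forall>i<d. \<epsilon> i > 0) \<and>
     (\<forall>i<d. \<forall>j<d. \<epsilon> i * of_int (C $$ (i,j)) = \<epsilon> j * of_int (C $$ (j,i))))"

definition marked_dynkin :: "nat \<Rightarrow> int mat \<Rightarrow> bool" where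
  "marked_dynkin d C \<longleftrightarrow> d \<ge> 1 \<and> is_gcm d C \<and> symmetrizable d C"

text \<open>C(X_n): C(X) as upper-left block, a simply-laced chain of nodes d+1..n attached to node d.\<close>
definition cartan_ext :: "nat \<Rightarrow> int mat \<Rightarrow> nat \<Rightarrow> int mat" where
  "cartan_ext d C n = mat n n (\<lambda>(i,j).
      if i < d \<and> j < d then C $$ (i,j)
      else if i = j then 2
      else if (j = i + 1 \<or> i = j + 1) \<and> min i j \<ge> d - 1 then -1
      else 0)"

definition det_ext :: "nat \<Rightarrow> int mat \<Rightarrow> nat \<Rightarrow> int" where
  "det_ext d C n = det (cartan_ext d C n)"

text \<open>Common difference of the arithmetic sequence det(X_n), n \<ge> d.\<close>
definition Delta :: "nat \<Rightarrow> int mat \<Rightarrow> int" where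
  "Delta d C = det_ext d C (d + 1) - det_ext d C d"

definition extensible :: "nat \<Rightarrow> int mat \<Rightarrow> bool" where
  "extensible d C \<longleftrightarrow> Delta d C \<noteq> 0 \<and> det C \<noteq> 0 \<and> coprime (Delta d C) (det C)"

text \<open>Weights of g(X_n) (det(X_n) \<noteq> 0) in coordinates w.r.t. the fundamental weights:
  \<lambda> \<mapsto> (\<lambda>(coroot_i))_i identifies P(X_n) with Z^n. Then omega_i is the i-th unit vector
  and alpha_j = \<Sum>_i C_ij omega_i is the j-th column of C(X_n).\<close>
definition fund_weight :: "nat \<Rightarrow> nat \<Rightarrow> int vec" where
  "fund_weight n i = unit_vec n i"

definition simple_root :: "nat \<Rightarrow> int mat \<Rightarrow> nat \<Rightarrow> nat \<Rightarrow> int vec" where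
  "simple_root d C n j = col (cartan_ext d C n) j"

definition root_lattice :: "nat \<Rightarrow> int mat \<Rightarrow> nat \<Rightarrow> int vec set" where
  "root_lattice d C n = {finsum_vec TYPE(int) n (\<lambda>j. of_int (c j) \<cdot>\<^sub>v simple_root d C n j) {0..<n} | c. True}"

definition cong_Q :: "nat \<Rightarrow> int mat \<Rightarrow> nat \<Rightarrow> int vec \<Rightarrow> int vec \<Rightarrow> bool" where
  "cong_Q d C n x y \<longleftrightarrow> x - y \<in> root_lattice d C n"

end

theory Submission imports Defs "HOL-Number_Theory.Cong" begin

lemma ce_carrier: "cartan_ext d C n \<in> carrier_mat n n"
  by (simp add: cartan_ext_def)

lemma ce_dims[simp]: "dim_row (cartan_ext d C n) = n" "dim_col (cartan_ext d C n) = n"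
  by (simp_all add: cartan_ext_def)

lemma ce_entry: "i < n \<Longrightarrow> j < n \<Longrightarrow> cartan_ext d C n $$ (i,j) =
  (if i < d \<and> j < d then C $$ (i,j) else if i = j then 2
   else if (j = i + 1 \<or> i = j + 1) \<and> min i j \<ge> d - 1 then -1 else 0)"
  by (simp add: cartan_ext_def)

lemma ce_del: "mat_delete (cartan_ext d C (Suc k)) k k = cartan_ext d C k"
  by (rule eq_matI) (auto simp: mat_delete_def cartan_ext_def)

lemma ce_rec:
  assumes "k \<ge> d" "d \<ge> 1"
  shows "det_ext d C (Suc k) = 2 * det_ext d C k - det_ext d C (k - 1)"
proof -
  obtain k' where k: "k = Suc k'" using assms by (cases k) auto
  define B where "B = cartan_ext d C (Suc k)"
  have B: "B \<in> carrier_mat (Suc k) (Suc k)" unfolding B_def by (rule ce_carrier)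
  have "det B = (\<Sum>j<Suc k. B $$ (k,j) * cofactor B k j)"
    by (rule laplace_expansion_row[OF B]) simp
  also have "\<dots> = B $$ (k,k') * cofactor B k k' + B $$ (k,k) * cofactor B k k"
  proof -
    have "(\<Sum>j<k'. B $$ (k,j) * cofactor B k j) = 0"
      by (rule sum.neutral) (use assms k in \<open>auto simp: B_def ce_entry\<close>)
    thus ?thesis unfolding k by simp
  qed
  also have "B $$ (k,k) = 2" using assms by (simp add: B_def ce_entry)
  also have "B $$ (k,k') = -1" using assms k by (simp add: B_def ce_entry)
  also have "cofactor B k k = det_ext d C k"
    by (simp add: cofactor_def B_def ce_del det_ext_def)
  also have "cofactor B k k' = det_ext d C k'"
  proof -
    define M where "M = mat_delete B k k'"
    have M: "M \<in> carrier_mat k k" unfolding M_def using mat_delete_carrier[OF B] by simp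
    have "det M = (\<Sum>i<k. M $$ (i,k') * cofactor M i k')"
      by (rule laplace_expansion_column[OF M]) (simp add: k)
    also have "\<dots> = M $$ (k',k') * cofactor M k' k'"
    proof -
      have "(\<Sum>i<k'. M $$ (i,k') * cofactor M i k') = 0"
        by (rule sum.neutral) (use assms k in \<open>auto simp: M_def B_def mat_delete_def ce_entry\<close>)
      thus ?thesis unfolding k by simp
    qed
    also have "M $$ (k',k') = -1" using assms k by (simp add: M_def B_def mat_delete_def ce_entry)
    also have "mat_delete M k' k' = cartan_ext d C k'"
      by (rule eq_matI) (use k in \<open>auto simp: M_def B_def mat_delete_def cartan_ext_def\<close>)
    hence "cofactor M k' k' = det_ext d C k'" by (simp add: cofactor_def det_ext_def)
    finally have "det M = - det_ext d C k'" by simp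
    thus ?thesis unfolding cofactor_def M_def k by simp
  qed
  finally show ?thesis unfolding B_def det_ext_def k by simp
qed

lemma ce_diff:
  assumes "d \<ge> 1" "Suc k \<ge> d"
  shows "det_ext d C (Suc k) - det_ext d C k = Delta d C"
  using assms(2)
proof (induction k)
  case 0
  hence "d = 1" using assms(1) by simp
  thus ?case using ce_rec[of 1 1 C] by (simp add: Delta_def)
next
  case (Suc k)
  show ?case
  proof (cases "Suc k \<ge> d")
    case True
    with Suc have "det_ext d C (Suc k) - det_ext d C k = Delta d C" by simp
    moreover have "det_ext d C (Suc (Suc k)) = 2 * det_ext d C (Suc k) - det_ext d C k"
      using ce_rec[of d "Suc k" C] True assms by simp
    ultimately show ?thesis by simp
  next
    case False
    hence "d = Suc (Suc k)" using Suc.prems by simp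
    thus ?thesis using ce_rec[of d "Suc (Suc k)" C] assms by (simp add: Delta_def)
  qed
qed

lemma ce_lin:
  assumes "d \<ge> 1" "k \<ge> d"
  shows "det_ext d C k = det_ext d C d + int (k - d) * Delta d C"
  using assms(2)
proof (induction k rule: dec_induct)
  case base then show ?case by simp
next
  case (step k)
  thus ?case using ce_diff[of d k C] assms by (simp add: Suc_diff_le algebra_simps)
qed

lemma contract:
  fixes A :: "int mat"
  assumes "\<forall>k<n. f k = (\<Sum>j<n. c j * A $$ (k,j))"
  shows "(\<Sum>k<n. w k * f k) = (\<Sum>j<n. c j * (\<Sum>k<n. w k * A $$ (k,j)))"
proof -
  have "(\<Sum>k<n. w k * f k) = (\<Sum>k<n. \<Sum>j<n. w k * (c j * A $$ (k,j)))"
    using assms by (simp add: sum_distrib_left)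
  also have "\<dots> = (\<Sum>j<n. \<Sum>k<n. w k * (c j * A $$ (k,j)))" by (rule sum.swap)
  also have "\<dots> = (\<Sum>j<n. c j * (\<Sum>k<n. w k * A $$ (k,j)))"
    by (simp add: sum_distrib_left ac_simps)
  finally show ?thesis .
qed

lemma delta_sum:
  fixes w :: "nat \<Rightarrow> int"
  assumes "i < n" "n1 < n"
  shows "(\<Sum>k<n. w k * ((if k = i then a else 0) - (if k = n1 then e else 0))) = a * w i - e * w n1"
proof -
  have "(\<Sum>k<n. w k * ((if k = i then a else 0) - (if k = n1 then e else 0)))
      = (\<Sum>k<n. (if k = i then a * w k else 0) - (if k = n1 then e * w k else 0))"
    by (rule sum.cong) (auto simp: algebra_simps)
  also have "\<dots> = a * w i - e * w n1"
    using assms by (simp add: sum_subtractf)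
  finally show ?thesis .
qed

theorem lemma3p5:
  fixes d n :: nat and C :: "int mat" and b :: "int vec"
  defines "A \<equiv> cartan_ext d C n"
      and "m \<equiv> det_ext d C n"
      and "\<Delta> \<equiv> Delta d C"
  assumes X: "marked_dynkin d C" and ext: "extensible d C"
      and nd: "n \<ge> d" and m0: "m \<noteq> 0"
      and bdim: "b \<in> carrier_vec n"
      and hb: "\<forall>i<n. cong_Q d C n ((- \<Delta>) \<cdot>\<^sub>v fund_weight n i) ((b $ i) \<cdot>\<^sub>v fund_weight n (n - 1))"
  shows "(\<forall>j<n. [(transpose_mat A *\<^sub>v b) $ j = 0] (mod m))
     \<and> (\<forall>x \<in> carrier_vec n. (\<forall>j<n. [(transpose_mat A *\<^sub>v x) $ j = 0] (mod m)) \<longrightarrow>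
           (\<exists>c::int. \<forall>i<n. [x $ i = c * b $ i] (mod m)))
     \<and> ([b $ (n - 1) = - \<Delta>] (mod m))
     \<and> (\<forall>y \<in> carrier_vec n. (\<forall>j<n. [(transpose_mat A *\<^sub>v y) $ j = 0] (mod m))
           \<and> [y $ (n - 1) = - \<Delta>] (mod m) \<longrightarrow> (\<forall>i<n. [y $ i = b $ i] (mod m)))"
proof -
  have d1: "d \<ge> 1" using X by (simp add: marked_dynkin_def)
  have Cc: "C \<in> carrier_mat d d" using X by (simp add: marked_dynkin_def is_gcm_def)
  obtain n1 where nn: "n = Suc n1" using nd d1 by (cases n) auto
  have A: "A \<in> carrier_mat n n" unfolding A_def by (rule ce_carrier)
  define N where "N = adj_mat A"
  have Nc: "N \<in> carrier_mat n n" using adj_mat(1)[OF A] by (simp add: N_def)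
  have NA0: "N * A = m \<cdot>\<^sub>m 1\<^sub>m n" using adj_mat(3)[OF A] by (simp add: N_def m_def det_ext_def A_def)
  have NA: "(\<Sum>k<n. N $$ (i,k) * A $$ (k,j)) = (if i = j then m else 0)" if "i < n" "j < n" for i j
  proof -
    have "(N * A) $$ (i,j) = (if i = j then m else 0)" using NA0 that by simp
    moreover have "(N * A) $$ (i,j) = (\<Sum>k<n. N $$ (i,k) * A $$ (k,j))"
      using that A Nc by (simp add: scalar_prod_def atLeast0LessThan)
    ultimately show ?thesis by simp
  qed
  have CC: "cartan_ext d C d = C" by (rule eq_matI) (use Cc in \<open>auto simp: cartan_ext_def\<close>)
  have Nlast: "N $$ (n1,n1) = m - \<Delta>"
  proof -
    have "N $$ (n1,n1) = det_ext d C n1"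
      using A nn by (simp add: N_def adj_mat_def cofactor_def A_def ce_del det_ext_def)
    moreover have "m - det_ext d C n1 = \<Delta>"
      using ce_diff[of d n1 C] d1 nd nn by (simp add: m_def \<Delta>_def)
    ultimately show ?thesis by simp
  qed
  have cop: "coprime m \<Delta>"
  proof -
    have "m = det C + int (n - d) * \<Delta>"
      using ce_lin[of d n C] d1 nd CC by (simp add: m_def \<Delta>_def det_ext_def)
    moreover have "coprime (det C) \<Delta>" using ext by (simp add: extensible_def \<Delta>_def ac_simps)
    moreover have "gcd \<Delta> (int (n - d) * \<Delta> + det C) = gcd \<Delta> (det C)" by (rule gcd_add_mult)
    ultimately show ?thesis by (simp add: coprime_iff_gcd_eq_1 gcd.commute add.commute)
  qed
  have canc: "m dvd z" if "m dvd \<Delta> * z" for z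
    using that cop coprime_dvd_mult_right_iff by blast
  have unpack: "\<exists>c. \<forall>k<n. (if k = i then - \<Delta> else 0) - (if k = n1 then b $ i else 0) = (\<Sum>j<n. c j * A $$ (k,j))"
    if i: "i < n" for i
  proof -
    from hb i have "cong_Q d C n ((- \<Delta>) \<cdot>\<^sub>v fund_weight n i) ((b $ i) \<cdot>\<^sub>v fund_weight n (n - 1))" by simp
    then obtain c where c: "(- \<Delta>) \<cdot>\<^sub>v fund_weight n i - (b $ i) \<cdot>\<^sub>v fund_weight n (n - 1)
       = finsum_vec TYPE(int) n (\<lambda>j. of_int (c j) \<cdot>\<^sub>v simple_root d C n j) {0..<n}"
      by (auto simp: cong_Q_def root_lattice_def)
    show ?thesis
    proof (intro exI allI impI)
      fix k assume k: "k < n"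
      have "(if k = i then - \<Delta> else 0) - (if k = n1 then b $ i else 0)
          = ((- \<Delta>) \<cdot>\<^sub>v fund_weight n i - (b $ i) \<cdot>\<^sub>v fund_weight n (n - 1)) $ k"
        using k i nn unfolding fund_weight_def
        apply (subst index_minus_vec) apply simp apply simp done
      also have "\<dots> = finsum_vec TYPE(int) n (\<lambda>j. of_int (c j) \<cdot>\<^sub>v simple_root d C n j) {0..<n} $ k"
        by (simp only: c)
      also have "\<dots> = (\<Sum>j\<in>{0..<n}. (of_int (c j) \<cdot>\<^sub>v simple_root d C n j) $ k)"
        using k apply (rule_tac index_finsum_vec)
        apply simp apply simp apply (rule Pi_I) apply (simp add: simple_root_def)
        apply (rule carrier_vecI) apply simp done
      also have "\<dots> = (\<Sum>j<n. c j * A $$ (k,j))"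
        unfolding atLeast0LessThan
        by (rule sum.cong) (use k in \<open>simp_all add: simple_root_def A_def\<close>)
      finally show "(if k = i then - \<Delta> else 0) - (if k = n1 then b $ i else 0) = (\<Sum>j<n. c j * A $$ (k,j))" .
    qed
  qed
  have E: "m dvd (- \<Delta> * w i - b $ i * w n1)"
    if i: "i < n" and w: "\<forall>j<n. m dvd (\<Sum>k<n. w k * A $$ (k,j))" for i w
  proof -
    obtain c where c: "\<forall>k<n. (if k = i then - \<Delta> else 0) - (if k = n1 then b $ i else 0) = (\<Sum>j<n. c j * A $$ (k,j))"
      using unpack[OF i] by blast
    have "(\<Sum>k<n. w k * ((if k = i then - \<Delta> else 0) - (if k = n1 then b $ i else 0)))
        = (\<Sum>j<n. c j * (\<Sum>k<n. w k * A $$ (k,j)))" by (rule contract[OF c])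
    moreover have "m dvd (\<Sum>j<n. c j * (\<Sum>k<n. w k * A $$ (k,j)))"
      by (rule dvd_sum) (use w in \<open>auto intro: dvd_mult\<close>)
    ultimately show ?thesis using delta_sum[OF i, of n1 w "- \<Delta>" "b $ i"] nn by simp
  qed
  have bN: "m dvd (b $ i - N $$ (n1,i))" if i: "i < n" for i
  proof -
    have "m dvd (- \<Delta> * N $$ (n1,i) - b $ i * N $$ (n1,n1))"
      by (rule E[OF i]) (use NA nn in \<open>auto simp: mult.commute\<close>)
    hence "m dvd (- \<Delta> * N $$ (n1,i) - b $ i * (m - \<Delta>))" using Nlast by simp
    hence "m dvd (- \<Delta> * N $$ (n1,i) - b $ i * (m - \<Delta>) + b $ i * m)" by simp
    hence "m dvd \<Delta> * (b $ i - N $$ (n1,i))" by (simp add: algebra_simps)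
    thus ?thesis by (rule canc)
  qed
  have TA: "(transpose_mat A *\<^sub>v v) $ j = (\<Sum>k<n. v $ k * A $$ (k,j))" if "j < n" "v \<in> carrier_vec n" for v j
    using that A by (simp add: scalar_prod_def atLeast0LessThan mult.commute)
  have P1: "\<forall>j<n. [(transpose_mat A *\<^sub>v b) $ j = 0] (mod m)"
  proof (intro allI impI)
    fix j assume j: "j < n"
    have d1: "m dvd (\<Sum>k<n. (b $ k - N $$ (n1,k)) * A $$ (k,j))"
      by (rule dvd_sum) (use bN in \<open>auto intro: dvd_mult2\<close>)
    have d2: "m dvd (\<Sum>k<n. N $$ (n1,k) * A $$ (k,j))"
      using NA[of n1 j] j nn by simp
    have "(\<Sum>k<n. b $ k * A $$ (k,j)) = (\<Sum>k<n. (b $ k - N $$ (n1,k)) * A $$ (k,j)) + (\<Sum>k<n. N $$ (n1,k) * A $$ (k,j))"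
      by (simp add: sum.distrib[symmetric] algebra_simps)
    hence "m dvd (\<Sum>k<n. b $ k * A $$ (k,j))" using d1 d2 by simp
    thus "[(transpose_mat A *\<^sub>v b) $ j = 0] (mod m)"
      using TA[OF j bdim] by (simp add: cong_0_iff)
  qed
  have P3: "[b $ (n - 1) = - \<Delta>] (mod m)"
  proof -
    have "m dvd b $ n1 - (m - \<Delta>)" using bN[of n1] nn Nlast by simp
    hence "m dvd (b $ n1 - (m - \<Delta>)) + m" by (rule dvd_add) simp
    moreover have "(b $ n1 - (m - \<Delta>)) + m = b $ n1 - (- \<Delta>)" by simp
    ultimately show ?thesis using nn by (simp only: cong_iff_dvd_diff) simp
  qed
  have ker: "\<forall>j<n. m dvd (\<Sum>k<n. x $ k * A $$ (k,j))"
    if "x \<in> carrier_vec n" "\<forall>j<n. [(transpose_mat A *\<^sub>v x) $ j = 0] (mod m)" for x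
    using that TA by (simp add: cong_0_iff)
  obtain u where u: "m dvd (\<Delta> * u - 1)"
  proof -
    from cop obtain s t where "s * m + t * \<Delta> = 1"
      using bezout_int[of m \<Delta>] by (auto simp: coprime_iff_gcd_eq_1)
    hence "\<Delta> * t - 1 = - (s * m)" by (simp add: algebra_simps)
    thus ?thesis using that[of t] by simp
  qed
  have P2: "\<forall>x \<in> carrier_vec n. (\<forall>j<n. [(transpose_mat A *\<^sub>v x) $ j = 0] (mod m)) \<longrightarrow>
           (\<exists>c::int. \<forall>i<n. [x $ i = c * b $ i] (mod m))"
  proof (intro ballI impI)
    fix x :: "int vec" assume x: "x \<in> carrier_vec n" and hx: "\<forall>j<n. [(transpose_mat A *\<^sub>v x) $ j = 0] (mod m)"
    show "\<exists>c::int. \<forall>i<n. [x $ i = c * b $ i] (mod m)"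
    proof (intro exI allI impI)
      fix i assume i: "i < n"
      have e: "m dvd (- \<Delta> * x $ i - b $ i * x $ n1)" using E[OF i ker[OF x hx]] by simp
      have "x $ i - (- u * x $ n1) * b $ i = - (x $ i) * (\<Delta> * u - 1) - u * (- \<Delta> * x $ i - b $ i * x $ n1)"
        by (simp add: algebra_simps)
      moreover have "m dvd - (x $ i) * (\<Delta> * u - 1) - u * (- \<Delta> * x $ i - b $ i * x $ n1)"
        by (rule dvd_diff; rule dvd_mult) (fact u, fact e)
      ultimately show "[x $ i = (- u * x $ n1) * b $ i] (mod m)" by (simp add: cong_iff_dvd_diff)
    qed
  qed
  have P4: "\<forall>y \<in> carrier_vec n. (\<forall>j<n. [(transpose_mat A *\<^sub>v y) $ j = 0] (mod m))
           \<and> [y $ (n - 1) = - \<Delta>] (mod m) \<longrightarrow> (\<forall>i<n. [y $ i = b $ i] (mod m))"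
  proof (intro ballI impI allI)
    fix y :: "int vec" and i assume y: "y \<in> carrier_vec n"
      and hy: "(\<forall>j<n. [(transpose_mat A *\<^sub>v y) $ j = 0] (mod m)) \<and> [y $ (n - 1) = - \<Delta>] (mod m)"
      and i: "i < n"
    have e: "m dvd (- \<Delta> * y $ i - b $ i * y $ n1)" using E[OF i ker[OF y]] hy by simp
    have l: "m dvd (y $ n1 + \<Delta>)" using hy nn by (simp add: cong_iff_dvd_diff)
    have "\<Delta> * (y $ i - b $ i) = - (- \<Delta> * y $ i - b $ i * y $ n1) - b $ i * (y $ n1 + \<Delta>)"
      by (simp add: algebra_simps)
    moreover have "m dvd - (- \<Delta> * y $ i - b $ i * y $ n1) - b $ i * (y $ n1 + \<Delta>)"
      by (rule dvd_diff, subst dvd_minus_iff, fact e, rule dvd_mult, fact l)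
    ultimately have "m dvd \<Delta> * (y $ i - b $ i)" by simp
    hence "m dvd (y $ i - b $ i)" by (rule canc)
    thus "[y $ i = b $ i] (mod m)" by (simp add: cong_iff_dvd_diff)
  qed
  show ?thesis by (rule conjI[OF P1 conjI[OF P2 conjI[OF P3 P4]]])
qed

end
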